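(* Let $M=\langle W,\leq,R,V\rangle$ be a brIML1-model, let $\gamma$ be a formula such that $w\nVdash\gamma$ for some $w\in W$, and let $\Sigma$ be the set of all subformulas of $\gamma$. Then the filtered frame $F_\Sigma=\langle W_\Sigma,\leq_\Sigma,R_\Sigma\rangle$ is a (well-defined) brIML1-frame.
   Context: Formulas are built from a denumerable set $PV$ of propositional variables and $\bot$ using $\land,\lor,\rightarrow$ and unary $\Delta$. A brIML1-frame is a triple $\langle W,\leq,R\rangle$, $W$ non-empty, $\leq$ a partial order on $W$, $R$ a binary relation with (1) $w\leq v\Rightarrow wRv$ and (2) ($w\leq v$ and $vRu$) $\Rightarrow wRu$. A brIML1-model adds $V:PV\to P(W)$ upward closed under $\leq$; forcing: atoms via $V$, $\bot$ never, $\land,\lor$ pointwise, $w\Vdash\varphi\rightarrow\psi$ iff every $v\geq w$ has $v\nVdash\varphi$ or $v\Vdash\psi$, $w\Vdash\Delta\varphi$ iff every $v$ with $wRv$ has $v\Vdash\varphi$. Filtration: $w\sim v$ iff $w$ and $v$ force the same formulas of $\Sigma$; $[w]$ is the class of $w$; $W_\Sigma=\{[w]:w\in W\}$; $[w]\leq_\Sigma[v]$ iff for every $\alpha\in\Sigma$, $w\Vdash\alpha$ implies $v\Vdash\alpha$; $[w]R_\Sigma[v]$ iff for every formula $\Delta\beta\in\Sigma$, $w\Vdash\Delta\beta$ implies $v\Vdash\beta$. *)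

theory Defs
  imports Main
begin

datatype fm = Var nat | Bot | And fm fm | Or fm fm | Imp fm fm | Delta fm

definition brIML1_frame :: "'w set \<Rightarrow> ('w \<Rightarrow> 'w \<Rightarrow> bool) \<Rightarrow> ('w \<Rightarrow> 'w \<Rightarrow> bool) \<Rightarrow> bool" where
  "brIML1_frame W le R \<longleftrightarrow>
     W \<noteq> {} \<and>
     (\<forall>w\<in>W. le w w) \<and>
     (\<forall>w\<in>W. \<forall>v\<in>W. le w v \<and> le v w \<longrightarrow> w = v) \<and>
     (\<forall>w\<in>W. \<forall>v\<in>W. \<forall>u\<in>W. le w v \<and> le v u \<longrightarrow> le w u) \<and>
     (\<forall>w\<in>W. \<forall>v\<in>W. le w v \<longrightarrow> R w v) \<and>
     (\<forall>w\<in>W. \<forall>v\<in>W. \<forall>u\<in>W. le w v \<and> R v u \<longrightarrow> R w u)"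

definition brIML1_model :: "'w set \<Rightarrow> ('w \<Rightarrow> 'w \<Rightarrow> bool) \<Rightarrow> ('w \<Rightarrow> 'w \<Rightarrow> bool) \<Rightarrow> (nat \<Rightarrow> 'w set) \<Rightarrow> bool" where
  "brIML1_model W le R V \<longleftrightarrow>
     brIML1_frame W le R \<and>
     (\<forall>p. V p \<subseteq> W) \<and>
     (\<forall>p. \<forall>w\<in>W. \<forall>v\<in>W. le w v \<and> w \<in> V p \<longrightarrow> v \<in> V p)"

primrec forces :: "'w set \<Rightarrow> ('w \<Rightarrow> 'w \<Rightarrow> bool) \<Rightarrow> ('w \<Rightarrow> 'w \<Rightarrow> bool) \<Rightarrow> (nat \<Rightarrow> 'w set) \<Rightarrow> 'w \<Rightarrow> fm \<Rightarrow> bool" where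
  "forces W le R V w (Var p) = (w \<in> V p)"
| "forces W le R V w Bot = False"
| "forces W le R V w (And a b) = (forces W le R V w a \<and> forces W le R V w b)"
| "forces W le R V w (Or a b) = (forces W le R V w a \<or> forces W le R V w b)"
| "forces W le R V w (Imp a b) =
     (\<forall>v\<in>W. le w v \<longrightarrow> \<not> forces W le R V v a \<or> forces W le R V v b)"
| "forces W le R V w (Delta a) = (\<forall>v\<in>W. R w v \<longrightarrow> forces W le R V v a)"

primrec subformulas :: "fm \<Rightarrow> fm set" where
  "subformulas (Var p) = {Var p}"
| "subformulas Bot = {Bot}"
| "subformulas (And a b) = insert (And a b) (subformulas a \<union> subformulas b)"
| "subformulas (Or a b) = insert (Or a b) (subformulas a \<union> subformulas b)"
| "subformulas (Imp a b) = insert (Imp a b) (subformulas a \<union> subformulas b)"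
| "subformulas (Delta a) = insert (Delta a) (subformulas a)"

definition fclass :: "'w set \<Rightarrow> ('w \<Rightarrow> 'w \<Rightarrow> bool) \<Rightarrow> ('w \<Rightarrow> 'w \<Rightarrow> bool) \<Rightarrow> (nat \<Rightarrow> 'w set) \<Rightarrow> fm set \<Rightarrow> 'w \<Rightarrow> 'w set" where
  "fclass W le R V \<Sigma> w =
     {v \<in> W. \<forall>\<alpha>\<in>\<Sigma>. forces W le R V w \<alpha> \<longleftrightarrow> forces W le R V v \<alpha>}"

definition fW :: "'w set \<Rightarrow> ('w \<Rightarrow> 'w \<Rightarrow> bool) \<Rightarrow> ('w \<Rightarrow> 'w \<Rightarrow> bool) \<Rightarrow> (nat \<Rightarrow> 'w set) \<Rightarrow> fm set \<Rightarrow> 'w set set" where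
  "fW W le R V \<Sigma> = fclass W le R V \<Sigma> ` W"

definition fle :: "'w set \<Rightarrow> ('w \<Rightarrow> 'w \<Rightarrow> bool) \<Rightarrow> ('w \<Rightarrow> 'w \<Rightarrow> bool) \<Rightarrow> (nat \<Rightarrow> 'w set) \<Rightarrow> fm set \<Rightarrow> 'w set \<Rightarrow> 'w set \<Rightarrow> bool" where
  "fle W le R V \<Sigma> X Y \<longleftrightarrow>
     (\<exists>w\<in>W. \<exists>v\<in>W. X = fclass W le R V \<Sigma> w \<and> Y = fclass W le R V \<Sigma> v \<and>
        (\<forall>\<alpha>\<in>\<Sigma>. forces W le R V w \<alpha> \<longrightarrow> forces W le R V v \<alpha>))"

definition fR :: "'w set \<Rightarrow> ('w \<Rightarrow> 'w \<Rightarrow> bool) \<Rightarrow> ('w \<Rightarrow> 'w \<Rightarrow> bool) \<Rightarrow> (nat \<Rightarrow> 'w set) \<Rightarrow> fm set \<Rightarrow> 'w set \<Rightarrow> 'w set \<Rightarrow> bool" where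
  "fR W le R V \<Sigma> X Y \<longleftrightarrow>
     (\<exists>w\<in>W. \<exists>v\<in>W. X = fclass W le R V \<Sigma> w \<and> Y = fclass W le R V \<Sigma> v \<and>
        (\<forall>\<beta>. Delta \<beta> \<in> \<Sigma> \<longrightarrow> forces W le R V w (Delta \<beta>) \<longrightarrow> forces W le R V v \<beta>))"

end

theory Submission
  imports Defs
begin

lemma fclass_eq_agree:
  assumes "fclass W le R V S w = fclass W le R V S v" "v \<in> W" "a \<in> S"
  shows "forces W le R V w a = forces W le R V v a"
proof -
  have "v \<in> fclass W le R V S v" using assms(2) by (simp add: fclass_def)
  hence "v \<in> fclass W le R V S w" using assms(1) by simp
  thus ?thesis using assms(3) by (simp add: fclass_def)
qed

lemma fclass_eqI:
  assumes "\<forall>a\<in>S. forces W le R V w a = forces W le R V v a"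
  shows "fclass W le R V S w = fclass W le R V S v"
  using assms unfolding fclass_def by auto

theorem theorem5p3:
  fixes W :: "'w set" and le R :: "'w \<Rightarrow> 'w \<Rightarrow> bool" and V :: "nat \<Rightarrow> 'w set"
    and \<gamma> :: fm and w :: 'w
  assumes "brIML1_model W le R V"
    and "w \<in> W" and "\<not> forces W le R V w \<gamma>"
  shows "brIML1_frame (fW W le R V (subformulas \<gamma>))
           (fle W le R V (subformulas \<gamma>)) (fR W le R V (subformulas \<gamma>))"
proof -
  let ?S = "subformulas \<gamma>"
  let ?c = "fclass W le R V ?S"
  have F: "brIML1_frame W le R" using assms(1) unfolding brIML1_model_def by (elim conjE)
  have F1: "\<forall>w\<in>W. le w w" using F unfolding brIML1_frame_def by (elim conjE)
  have F2: "\<forall>w\<in>W. \<forall>v\<in>W. le w v \<longrightarrow> R w v"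
      using F unfolding brIML1_frame_def by (elim conjE)
  have Rrefl: "\<And>v. v \<in> W \<Longrightarrow> R v v" using F1 F2 by simp
  have ne: "fW W le R V ?S \<noteq> {}" using assms(2) by (auto simp: fW_def)
  have refl: "\<forall>X\<in>fW W le R V ?S. fle W le R V ?S X X"
  proof
    fix X assume "X \<in> fW W le R V ?S"
    then obtain a where "a \<in> W" "X = ?c a" unfolding fW_def by blast
    thus "fle W le R V ?S X X" unfolding fle_def by blast
  qed
  have antisym: "\<forall>X\<in>fW W le R V ?S. \<forall>Y\<in>fW W le R V ?S.
      fle W le R V ?S X Y \<and> fle W le R V ?S Y X \<longrightarrow> X = Y"
  proof (intro ballI impI)
    fix X Y assume H: "fle W le R V ?S X Y \<and> fle W le R V ?S Y X"
    from H have H1: "fle W le R V ?S X Y" by simp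
    from H have H2: "fle W le R V ?S Y X" by simp
    from H1 obtain a b where ab: "a \<in> W" "b \<in> W" "X = ?c a" "Y = ?c b"
       "\<forall>\<alpha>\<in>?S. forces W le R V a \<alpha> \<longrightarrow> forces W le R V b \<alpha>"
      unfolding fle_def by blast
    from H2 obtain a' b' where ab': "a' \<in> W" "b' \<in> W" "Y = ?c a'" "X = ?c b'"
       "\<forall>\<alpha>\<in>?S. forces W le R V a' \<alpha> \<longrightarrow> forces W le R V b' \<alpha>"
      unfolding fle_def by blast
    have "\<forall>\<alpha>\<in>?S. forces W le R V a \<alpha> = forces W le R V b \<alpha>"
    proof
      fix \<alpha> assume h: "\<alpha> \<in> ?S"
      have "forces W le R V b \<alpha> = forces W le R V a' \<alpha>"
        using fclass_eq_agree[of W le R V ?S b a' \<alpha>] ab ab' h by simp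
      moreover have "forces W le R V b' \<alpha> = forces W le R V a \<alpha>"
        using fclass_eq_agree[of W le R V ?S b' a \<alpha>] ab ab' h by simp
      ultimately show "forces W le R V a \<alpha> = forces W le R V b \<alpha>"
        using ab(5) ab'(5) h by blast
    qed
    hence "?c a = ?c b" by (rule fclass_eqI)
    thus "X = Y" using ab(3,4) by simp
  qed
  have trans: "\<forall>X\<in>fW W le R V ?S. \<forall>Y\<in>fW W le R V ?S. \<forall>Z\<in>fW W le R V ?S.
      fle W le R V ?S X Y \<and> fle W le R V ?S Y Z \<longrightarrow> fle W le R V ?S X Z"
  proof (intro ballI impI)
    fix X Y Z assume H: "fle W le R V ?S X Y \<and> fle W le R V ?S Y Z"
    from H have H1: "fle W le R V ?S X Y" by simp
    from H have H2: "fle W le R V ?S Y Z" by simp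
    from H1 obtain a b where ab: "a \<in> W" "b \<in> W" "X = ?c a" "Y = ?c b"
       "\<forall>\<alpha>\<in>?S. forces W le R V a \<alpha> \<longrightarrow> forces W le R V b \<alpha>"
      unfolding fle_def by blast
    from H2 obtain a' b' where ab': "a' \<in> W" "b' \<in> W" "Y = ?c a'" "Z = ?c b'"
       "\<forall>\<alpha>\<in>?S. forces W le R V a' \<alpha> \<longrightarrow> forces W le R V b' \<alpha>"
      unfolding fle_def by blast
    have "\<forall>\<alpha>\<in>?S. forces W le R V a \<alpha> \<longrightarrow> forces W le R V b' \<alpha>"
    proof (intro ballI impI)
      fix \<alpha> assume h: "\<alpha> \<in> ?S" "forces W le R V a \<alpha>"
      have "forces W le R V b \<alpha> = forces W le R V a' \<alpha>"
        using fclass_eq_agree[of W le R V ?S b a' \<alpha>] ab ab' h by simp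
      thus "forces W le R V b' \<alpha>" using ab(5) ab'(5) h by blast
    qed
    thus "fle W le R V ?S X Z" unfolding fle_def using ab(1,3) ab'(2,4) by blast
  qed
  have leR: "\<forall>X\<in>fW W le R V ?S. \<forall>Y\<in>fW W le R V ?S.
      fle W le R V ?S X Y \<longrightarrow> fR W le R V ?S X Y"
  proof (intro ballI impI)
    fix X Y assume "fle W le R V ?S X Y"
    then obtain a b where ab: "a \<in> W" "b \<in> W" "X = ?c a" "Y = ?c b"
       "\<forall>\<alpha>\<in>?S. forces W le R V a \<alpha> \<longrightarrow> forces W le R V b \<alpha>"
      unfolding fle_def by blast
    have "\<forall>\<beta>. Delta \<beta> \<in> ?S \<longrightarrow> forces W le R V a (Delta \<beta>) \<longrightarrow> forces W le R V b \<beta>"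
    proof (intro allI impI)
      fix \<beta> assume "Delta \<beta> \<in> ?S" "forces W le R V a (Delta \<beta>)"
      hence "forces W le R V b (Delta \<beta>)" using ab(5) by blast
      thus "forces W le R V b \<beta>" using Rrefl ab(2) by simp
    qed
    thus "fR W le R V ?S X Y" unfolding fR_def using ab(1-4) by blast
  qed
  have leRR: "\<forall>X\<in>fW W le R V ?S. \<forall>Y\<in>fW W le R V ?S. \<forall>Z\<in>fW W le R V ?S.
      fle W le R V ?S X Y \<and> fR W le R V ?S Y Z \<longrightarrow> fR W le R V ?S X Z"
  proof (intro ballI impI)
    fix X Y Z assume H: "fle W le R V ?S X Y \<and> fR W le R V ?S Y Z"
    from H have H1: "fle W le R V ?S X Y" by simp
    from H have H2: "fR W le R V ?S Y Z" by simp
    from H1 obtain a b where ab: "a \<in> W" "b \<in> W" "X = ?c a" "Y = ?c b"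
       "\<forall>\<alpha>\<in>?S. forces W le R V a \<alpha> \<longrightarrow> forces W le R V b \<alpha>"
      unfolding fle_def by blast
    from H2 obtain a' b' where ab': "a' \<in> W" "b' \<in> W" "Y = ?c a'" "Z = ?c b'"
       "\<forall>\<beta>. Delta \<beta> \<in> ?S \<longrightarrow> forces W le R V a' (Delta \<beta>) \<longrightarrow> forces W le R V b' \<beta>"
      unfolding fR_def by blast
    have "\<forall>\<beta>. Delta \<beta> \<in> ?S \<longrightarrow> forces W le R V a (Delta \<beta>) \<longrightarrow> forces W le R V b' \<beta>"
    proof (intro allI impI)
      fix \<beta> assume h: "Delta \<beta> \<in> ?S" "forces W le R V a (Delta \<beta>)"
      have "forces W le R V b (Delta \<beta>) = forces W le R V a' (Delta \<beta>)"
        using fclass_eq_agree[of W le R V ?S b a' "Delta \<beta>"] ab ab' h by simp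
      thus "forces W le R V b' \<beta>" using ab(5) ab'(5) h by blast
    qed
    thus "fR W le R V ?S X Z" unfolding fR_def using ab(1,3) ab'(2,4) by blast
  qed
  show ?thesis unfolding brIML1_frame_def
    using ne refl antisym trans leR leRR by (intro conjI)
qed

end
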